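(* Assume the standing assumptions below, let $\gamma\in[0,\gamma_* )$, and let $U(\cdot;\gamma)$ be the finite wavefront with speed $c(\gamma)$ normalized so that its support is $(-\infty,0]$. Let $V(\xi;\gamma):=\frac{m}{m-\alpha}U(\xi;\gamma)^{m-\alpha}$. Then $$\lim_{\xi\to0^-}V'(\xi;\gamma)=-c(\gamma)^\alpha,\qquad \lim_{\xi\to0^-}V''(\xi;\gamma)=\frac{(\gamma c(\gamma)-h'(0))(m-\alpha)}{(p-1)(m-\alpha+1)c(\gamma)^{1-\alpha}},$$ $$\lim_{\xi\to0^-}\big(|V'|^{p-2}V'\big)'(\xi;\gamma)=\frac{(\gamma c(\gamma)-h'(0))(m-\alpha)}{m-\alpha+1}.$$
   Context: Standing assumptions: $m>0$, $p>1$ with $m(p-1)>1$; $\alpha:=1/(p-1)$. $h\in C^1([0,\infty))$ satisfies $h(0)=0$, and for some $a\in[0,1)$: $h\le0$ on $[0,a]$, $h>0$ on $(a,1)$, $h<0$ on $(1,\infty)$, $h'(1)<0$; if $a>0$ also $\int_0^1h(u)u^{m-1}du>0$. For $\gamma\in[0,\gamma_* )$ ($\gamma_*>0$ small), $c(\gamma)>0$ denotes the unique speed for which the one-dimensional equation $u_t=(|(u^m)_r|^{p-2}(u^m)_r)_r+\gamma|(u^m)_r|^{p-2}(u^m)_r+h(u)$ has a finite wavefront, i.e. a travelling wave $U(r-ct)$ with $U$ continuous, nonincreasing, $U(-\infty)=1$, $U=0$ on some $[\xi_0,\infty)$ and $U>0$ on $(-\infty,\xi_0)$; it is unique up to translation,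 and smooth where positive. *)

theory Defs
  imports "HOL-Analysis.Analysis"
begin

definition alpha :: "real \<Rightarrow> real" where
  "alpha p = 1 / (p - 1)"

definition flux :: "real \<Rightarrow> real \<Rightarrow> (real \<Rightarrow> real) \<Rightarrow> real \<Rightarrow> real" where
  "flux m p U \<xi> = \<bar>deriv (\<lambda>s. U s powr m) \<xi>\<bar> powr (p - 2) * deriv (\<lambda>s. U s powr m) \<xi>"

definition test_fun :: "(real \<Rightarrow> real) \<Rightarrow> bool" where
  "test_fun \<phi> \<longleftrightarrow> (\<forall>\<xi>. \<phi> differentiable at \<xi>) \<and> continuous_on UNIV (deriv \<phi>)
     \<and> (\<exists>R. \<forall>\<xi>. \<bar>\<xi>\<bar> > R \<longrightarrow> \<phi> \<xi> = 0)"

text \<open>U is a travelling wave profile with speed c of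
  u_t = (|(u^m)_r|^(p-2)(u^m)_r)_r + gamma |(u^m)_r|^(p-2)(u^m)_r + h(u),
  i.e. u(r,t) = U(r - c t) is a (weak) solution:
  -c U' = Phi' + gamma Phi + h(U) with Phi = flux, in the sense of distributions,
  with U^m of class C^1.\<close>
definition tw_solution ::
  "real \<Rightarrow> real \<Rightarrow> (real \<Rightarrow> real) \<Rightarrow> real \<Rightarrow> real \<Rightarrow> (real \<Rightarrow> real) \<Rightarrow> bool" where
  "tw_solution m p h \<gamma> c U \<longleftrightarrow>
     (\<forall>\<xi>. (\<lambda>s. U s powr m) differentiable at \<xi>)
     \<and> continuous_on UNIV (deriv (\<lambda>s. U s powr m))
     \<and> (\<forall>\<phi>. test_fun \<phi> \<longrightarrow>
          ((\<lambda>\<xi>. (c * U \<xi> + flux m p U \<xi>) * deriv \<phi> \<xi>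
                 - (\<gamma> * flux m p U \<xi> + h (U \<xi>)) * \<phi> \<xi>) has_integral 0) UNIV)"

definition finite_wavefront ::
  "real \<Rightarrow> real \<Rightarrow> (real \<Rightarrow> real) \<Rightarrow> real \<Rightarrow> real \<Rightarrow> (real \<Rightarrow> real) \<Rightarrow> bool" where
  "finite_wavefront m p h \<gamma> c U \<longleftrightarrow>
     tw_solution m p h \<gamma> c U
     \<and> continuous_on UNIV U \<and> antimono U \<and> (U \<longlongrightarrow> 1) at_bot
     \<and> (\<exists>\<xi>0. (\<forall>\<xi>\<ge>\<xi>0. U \<xi> = 0) \<and> (\<forall>\<xi><\<xi>0. U \<xi> > 0))"

end

theory Submission
  imports Defs
begin

definition bump :: "real \<Rightarrow> real \<Rightarrow> real \<Rightarrow> real" where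
  "bump c d x = 3 / (4 * d^3) * max 0 (d^2 - (x - c)^2)"

lemma bump_cont: "continuous_on S (bump c d)"
  unfolding bump_def by (intro continuous_intros)

lemma bump_nonneg: "d > 0 \<Longrightarrow> bump c d x \<ge> 0"
  unfolding bump_def by auto

lemma bump_zero: "d > 0 \<Longrightarrow> \<bar>x - c\<bar> \<ge> d \<Longrightarrow> bump c d x = 0"
proof -
  assume "d > 0" "\<bar>x - c\<bar> \<ge> d"
  then have "d^2 \<le> (x-c)^2" by (metis abs_le_square_iff abs_of_pos) 
  then show ?thesis unfolding bump_def by auto
qed

lemma bump_int: assumes "d > 0" shows "(bump c d has_integral 1) {c-d..c+d}"
proof -
  define K where "K = 3 / (4 * d^3)"
  let ?G = "\<lambda>x. K * (d^2 * x - (x - c)^3 / 3)"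
  have "((\<lambda>x. K * (d^2 - (x - c)^2)) has_integral ?G (c+d) - ?G (c-d)) {c-d..c+d}"
    apply (rule fundamental_theorem_of_calculus)
    using assms apply simp
    apply (auto intro!: derivative_eq_intros simp: has_real_derivative_iff_has_vector_derivative[symmetric])
    done
  moreover have "?G (c+d) - ?G (c-d) = 1"
  proof -
    have e: "(c + d - c) ^ 3 = d^3" "(c - d - c) ^ 3 = - (d ^ 3)" "d^2 * d = d^3" by (simp_all add: power3_eq_cube power2_eq_square)
    have "?G (c+d) - ?G (c-d) = K * (2 * (d^2 * d) - 2 * d^3 / 3)"
      unfolding e(1,2) by (simp add: algebra_simps)
    also have "\<dots> = 1" unfolding e(3) K_def using assms by (simp add: field_simps)
    finally show ?thesis .
  qed
  moreover have "x \<in> {c-d..c+d} \<Longrightarrow> bump c d x = K * (d^2 - (x - c)^2)" for x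
  proof -
    assume "x \<in> {c-d..c+d}"
    then have "\<bar>x - c\<bar> \<le> d" by auto
    then have "(x-c)^2 \<le> d^2" using assms by (metis abs_le_square_iff abs_of_pos)
    then show ?thesis unfolding bump_def K_def by auto
  qed
  ultimately show ?thesis using has_integral_cong[of "{c-d..c+d}" "bump c d" "\<lambda>x. K * (d^2 - (x - c)^2)" 1] by simp
qed

lemma int_zero_below:
  fixes k :: "real \<Rightarrow> real"
  assumes "\<And>y. y \<le> l \<Longrightarrow> k y = 0" "u \<le> l"
  shows "integral {M..u} k = 0"
proof -
  have "integral {M..u} k = integral {M..u} (\<lambda>x. 0)"
    by (rule integral_cong) (use assms in auto)
  then show ?thesis by simp
qed

lemma indef_int_deriv:
  fixes k :: "real \<Rightarrow> real"
  assumes ck: "continuous_on UNIV k" and k0: "\<And>y. y \<le> l \<Longrightarrow> k y = 0"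
  shows "((\<lambda>x. integral {l..x} k) has_real_derivative k x) (at x)"
proof -
  define M where "M = min x l - 1"
  define N where "N = max x l + 1"
  have eq: "integral {l..u} k = integral {M..u} k" if "u \<in> {M<..<N}" for u
  proof (cases "u \<ge> l")
    case True
    have "integral {M..l} k + integral {l..u} k = integral {M..u} k"
      by (rule Henstock_Kurzweil_Integration.integral_combine) (use True M_def in \<open>auto intro!: integrable_continuous_interval continuous_on_subset[OF ck]\<close>)
    moreover have "integral {M..l} k = 0" by (rule int_zero_below[OF k0]) auto
    ultimately show ?thesis by simp
  next
    case False
    then have "integral {l..u} k = 0" by simp
    moreover have "integral {M..u} k = 0" by (rule int_zero_below[OF k0]) (use False in auto)
    ultimately show ?thesis by simp
  qed
  have "((\<lambda>u. integral {M..u} k) has_real_derivative k x) (at x within {M..N})"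
    by (rule integral_has_real_derivative) (use M_def N_def in \<open>auto intro: continuous_on_subset[OF ck]\<close>)
  then have "((\<lambda>u. integral {M..u} k) has_real_derivative k x) (at x)"
    using at_within_Icc_at[of M x N] M_def N_def by auto
  then show ?thesis
    by (rule has_field_derivative_transform_within_open[where S="{M<..<N}"]) (use eq M_def N_def in auto)
qed

lemma indef_int_bump:
  fixes T :: "real \<Rightarrow> real"
  assumes cT: "continuous_on UNIV T" and Tn: "\<And>y. T y \<ge> 0"
    and T0: "\<And>y. y \<le> s \<or> y \<ge> t \<Longrightarrow> T y = 0" and st: "s < t"
    and Ti: "(T has_integral 1) {s..t}"
  shows "x \<le> s \<Longrightarrow> integral {s..x} T = 0"
    and "0 \<le> integral {s..x} T" and "integral {s..x} T \<le> 1"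
    and "x \<ge> t \<Longrightarrow> integral {s..x} T = 1"
proof -
  have intg: "T integrable_on {u..v}" for u v
    by (intro integrable_continuous_interval continuous_on_subset[OF cT]) auto
  show "x \<le> s \<Longrightarrow> integral {s..x} T = 0" by (cases "x = s") auto
  show "0 \<le> integral {s..x} T" by (rule integral_nonneg[OF intg]) (use Tn in auto)
  have one: "integral {s..t} T = 1" using Ti by (rule integral_unique)
  show "integral {s..x} T \<le> 1"
  proof (cases "x \<le> t")
    case True
    show ?thesis
    proof (cases "s \<le> x")
      case True2: True
      have "integral {s..x} T + integral {x..t} T = integral {s..t} T"
        using Henstock_Kurzweil_Integration.integral_combine[where f=T and a=s and c=x and b=t] True True2 intg by auto
      moreover have "0 \<le> integral {x..t} T" by (rule integral_nonneg[OF intg]) (use Tn in auto)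
      ultimately show ?thesis using one by linarith
    next
      case False
      then show ?thesis by simp
    qed
  next
    case False
    have "integral {s..t} T + integral {t..x} T = integral {s..x} T"
      by (rule Henstock_Kurzweil_Integration.integral_combine) (use False st intg in auto)
    moreover have "integral {t..x} T = 0"
    proof -
      have "integral {t..x} T = integral {t..x} (\<lambda>x. 0)" by (rule integral_cong) (use T0 in auto)
      then show ?thesis by simp
    qed
    ultimately show ?thesis using one by linarith
  qed
  show "x \<ge> t \<Longrightarrow> integral {s..x} T = 1"
  proof -
    assume xt: "x \<ge> t"
    have "integral {s..t} T + integral {t..x} T = integral {s..x} T"
      by (rule Henstock_Kurzweil_Integration.integral_combine) (use xt st intg in auto)
    moreover have "integral {t..x} T = 0"
    proof -
      have "integral {t..x} T = integral {t..x} (\<lambda>x. 0)" by (rule integral_cong) (use T0 in auto)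
      then show ?thesis by simp
    qed
    ultimately show ?thesis using one by linarith
  qed
qed

lemma weighted_avg:
  fixes T P :: "real \<Rightarrow> real"
  assumes cT: "continuous_on UNIV T" and Tn: "\<And>y. T y \<ge> 0" and cP: "continuous_on UNIV P"
    and Ti: "(T has_integral 1) {s..t}"
    and e: "\<And>x. x \<in> {s..t} \<Longrightarrow> \<bar>P x - y\<bar> \<le> e"
  shows "\<bar>integral {s..t} (\<lambda>x. P x * T x) - y\<bar> \<le> e"
proof -
  have intg: "(\<lambda>x. P x * T x) integrable_on {s..t}" "(\<lambda>x. (P x - y) * T x) integrable_on {s..t}"
    "(\<lambda>x. e * T x) integrable_on {s..t}" "(\<lambda>x. y * T x) integrable_on {s..t}"
    by (intro integrable_continuous_interval continuous_intros continuous_on_subset[OF cP] continuous_on_subset[OF cT]; auto)+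
  have one: "integral {s..t} T = 1" using Ti by (rule integral_unique)
  have "integral {s..t} (\<lambda>x. (P x - y) * T x) = integral {s..t} (\<lambda>x. P x * T x) - integral {s..t} (\<lambda>x. y * T x)"
    by (subst integral_diff[symmetric]) (use intg Ti in \<open>auto simp: algebra_simps intro: has_integral_mult_right\<close>)
  also have "integral {s..t} (\<lambda>x. y * T x) = y" using one Ti by (simp add: integral_mult[symmetric] has_integral_integrable)
  finally have eq: "integral {s..t} (\<lambda>x. P x * T x) - y = integral {s..t} (\<lambda>x. (P x - y) * T x)" by simp
  have "norm (integral {s..t} (\<lambda>x. (P x - y) * T x)) \<le> integral {s..t} (\<lambda>x. e * T x)"
    by (rule integral_norm_bound_integral[OF intg(2) intg(3)])
       (use e Tn in \<open>auto simp: abs_mult intro!: mult_right_mono\<close>)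
  also have "\<dots> = e" using one Ti by (simp add: integral_mult[symmetric] has_integral_integrable)
  finally show ?thesis using eq by simp
qed

lemma weak_core:
  fixes P g :: "real \<Rightarrow> real"
  assumes cP: "continuous_on UNIV P" and cg: "continuous_on UNIV g"
  and weak: "\<And>\<phi>. test_fun \<phi> \<Longrightarrow> ((\<lambda>\<xi>. P \<xi> * deriv \<phi> \<xi> - g \<xi> * \<phi> \<xi>) has_integral 0) UNIV"
  and ab: "a < b" and \<delta>: "\<delta> > 0"
  and ea: "\<And>x. x \<in> {a-2*\<delta>..a} \<Longrightarrow> \<bar>P x - P a\<bar> \<le> ea"
  and eb: "\<And>x. x \<in> {b..b+2*\<delta>} \<Longrightarrow> \<bar>P x - P b\<bar> \<le> eb"
  and Mg: "\<And>x. x \<in> {a-2*\<delta>..b+2*\<delta>} \<Longrightarrow> \<bar>g x\<bar> \<le> M"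
  shows "\<bar>P a - P b - integral {a..b} g\<bar> \<le> ea + eb + 4*\<delta>*M"
proof -
  define l where "l = a-2*\<delta>"
  define r where "r = b+2*\<delta>"
  define Ta where "Ta = bump (a-\<delta>) \<delta>"
  define Tb where "Tb = bump (b+\<delta>) \<delta>"
  define Ia where "Ia = (\<lambda>x. integral {l..x} Ta)"
  define Ib where "Ib = (\<lambda>x. integral {b..x} Tb)"
  define \<phi> where "\<phi> = (\<lambda>x. Ia x - Ib x)"
  have cTa: "continuous_on UNIV Ta" and cTb: "continuous_on UNIV Tb"
    unfolding Ta_def Tb_def by (rule bump_cont)+
  have Tan: "\<And>y. Ta y \<ge> 0" and Tbn: "\<And>y. Tb y \<ge> 0"
    unfolding Ta_def Tb_def using \<delta> by (auto intro: bump_nonneg)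
  have Ta0: "\<And>y. y \<le> l \<or> y \<ge> a \<Longrightarrow> Ta y = 0"
    unfolding Ta_def l_def using \<delta> by (auto intro!: bump_zero)
  have Tb0: "\<And>y. y \<le> b \<or> y \<ge> r \<Longrightarrow> Tb y = 0"
    unfolding Tb_def r_def using \<delta> by (auto intro!: bump_zero)
  have Tai: "(Ta has_integral 1) {l..a}"
    using bump_int[OF \<delta>, of "a-\<delta>"] unfolding Ta_def l_def by (simp add: algebra_simps)
  have Tbi: "(Tb has_integral 1) {b..r}"
    using bump_int[OF \<delta>, of "b+\<delta>"] unfolding Tb_def r_def by (simp add: algebra_simps)
  have la: "l < a" and br: "b < r" using \<delta> unfolding l_def r_def by auto
  note IA = indef_int_bump[OF cTa Tan Ta0 la Tai, folded Ia_def]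
  note IB = indef_int_bump[OF cTb Tbn Tb0 br Tbi, folded Ib_def]
  have dIa: "(Ia has_real_derivative Ta x) (at x)" for x
    unfolding Ia_def by (rule indef_int_deriv[OF cTa]) (use Ta0 in auto)
  have dIb: "(Ib has_real_derivative Tb x) (at x)" for x
    unfolding Ib_def by (rule indef_int_deriv[OF cTb]) (use Tb0 in auto)
  have dphi: "(\<phi> has_real_derivative Ta x - Tb x) (at x)" for x
    unfolding \<phi>_def by (intro DERIV_diff dIa dIb)
  have derphi: "deriv \<phi> = (\<lambda>x. Ta x - Tb x)"
    using dphi DERIV_imp_deriv by blast
  have phi_bd: "\<bar>\<phi> x\<bar> \<le> 1" for x
    using IA(2,3)[of x] IB(2,3)[of x] unfolding \<phi>_def Ia_def Ib_def by auto
  have phi_one: "\<phi> x = 1" if "x \<in> {a..b}" for x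
    using IA(4)[of x] IB(1)[of x] that unfolding \<phi>_def Ia_def Ib_def by auto
  have test: "test_fun \<phi>"
    unfolding test_fun_def
  proof (intro conjI)
    show "\<forall>\<xi>. \<phi> differentiable at \<xi>" using dphi real_differentiable_def by blast
    show "continuous_on UNIV (deriv \<phi>)" unfolding derphi by (intro continuous_intros cTa cTb)
    show "\<exists>R. \<forall>\<xi>. R < \<bar>\<xi>\<bar> \<longrightarrow> \<phi> \<xi> = 0"
    proof (intro exI allI impI)
      fix \<xi> assume "\<bar>l\<bar> + \<bar>r\<bar> < \<bar>\<xi>\<bar>"
      then have "\<xi> < l \<or> \<xi> > r" by linarith
      then show "\<phi> \<xi> = 0"
      proof
        assume "\<xi> < l" then show ?thesis using IA(1)[of \<xi>] IB(1)[of \<xi>] la ab unfolding \<phi>_def Ia_def Ib_def by auto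
      next
        assume "\<xi> > r" then show ?thesis using IA(4)[of \<xi>] IB(4)[of \<xi>] br ab unfolding \<phi>_def Ia_def Ib_def by auto
      qed
    qed
  qed
  have W: "((\<lambda>\<xi>. P \<xi> * (Ta \<xi> - Tb \<xi>) - g \<xi> * \<phi> \<xi>) has_integral 0) UNIV"
    using weak[OF test] unfolding derphi .
  have cphi: "continuous_on UNIV \<phi>"
    using dphi by (meson DERIV_isCont continuous_at_imp_continuous_on)
  define J1 where "J1 = integral {l..a} (\<lambda>x. P x * Ta x)"
  define J2 where "J2 = integral {b..r} (\<lambda>x. P x * Tb x)"
  define J3 where "J3 = integral {l..r} (\<lambda>x. g x * \<phi> x)"
  have i1: "((\<lambda>x. P x * Ta x) has_integral J1) UNIV"
    unfolding J1_def
    by (rule has_integral_on_superset[where S="{l..a}"])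
       (use Ta0 in \<open>auto intro!: integrable_integral integrable_continuous_interval continuous_intros
            continuous_on_subset[OF cP] continuous_on_subset[OF cTa]\<close>)
  have i2: "((\<lambda>x. P x * Tb x) has_integral J2) UNIV"
    unfolding J2_def
    by (rule has_integral_on_superset[where S="{b..r}"])
       (use Tb0 in \<open>auto intro!: integrable_integral integrable_continuous_interval continuous_intros
            continuous_on_subset[OF cP] continuous_on_subset[OF cTb]\<close>)
  have phi0: "\<phi> x = 0" if "x \<notin> {l..r}" for x
  proof -
    have "x < l \<or> x > r" using that by auto
    then show ?thesis
    proof
      assume "x < l" then show ?thesis using IA(1)[of x] IB(1)[of x] la ab unfolding \<phi>_def Ia_def Ib_def by auto
    next
      assume "x > r" then show ?thesis using IA(4)[of x] IB(4)[of x] br ab unfolding \<phi>_def Ia_def Ib_def by auto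
    qed
  qed
  have gphi_int: "(\<lambda>x. g x * \<phi> x) integrable_on {u..v}" for u v
    by (intro integrable_continuous_interval continuous_intros continuous_on_subset[OF cg] continuous_on_subset[OF cphi]; auto)
  have i3: "((\<lambda>x. g x * \<phi> x) has_integral J3) UNIV"
    unfolding J3_def
    by (rule has_integral_on_superset[where S="{l..r}"])
       (use phi0 gphi_int in \<open>auto intro!: integrable_integral\<close>)
  have "((\<lambda>\<xi>. P \<xi> * Ta \<xi> - P \<xi> * Tb \<xi> - g \<xi> * \<phi> \<xi>) has_integral J1 - J2 - J3) UNIV"
    by (intro has_integral_diff i1 i2 i3)
  moreover have "(\<lambda>\<xi>. P \<xi> * Ta \<xi> - P \<xi> * Tb \<xi> - g \<xi> * \<phi> \<xi>) = (\<lambda>\<xi>. P \<xi> * (Ta \<xi> - Tb \<xi>) - g \<xi> * \<phi> \<xi>)"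
    by (auto simp: algebra_simps)
  ultimately have J0: "J1 - J2 - J3 = 0" using W has_integral_unique by metis
  have e1: "\<bar>J1 - P a\<bar> \<le> ea" unfolding J1_def
    by (rule weighted_avg[OF cTa Tan cP Tai]) (use ea l_def in auto)
  have e2: "\<bar>J2 - P b\<bar> \<le> eb" unfolding J2_def
    by (rule weighted_avg[OF cTb Tbn cP Tbi]) (use eb r_def in auto)
  have split: "J3 = integral {l..a} (\<lambda>x. g x * \<phi> x) + integral {a..b} (\<lambda>x. g x * \<phi> x) + integral {b..r} (\<lambda>x. g x * \<phi> x)"
  proof -
    have "integral {l..a} (\<lambda>x. g x * \<phi> x) + integral {a..r} (\<lambda>x. g x * \<phi> x) = J3"
      unfolding J3_def using la ab br gphi_int by (intro Henstock_Kurzweil_Integration.integral_combine) auto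
    moreover have "integral {a..b} (\<lambda>x. g x * \<phi> x) + integral {b..r} (\<lambda>x. g x * \<phi> x) = integral {a..r} (\<lambda>x. g x * \<phi> x)"
      using la ab br gphi_int by (intro Henstock_Kurzweil_Integration.integral_combine) auto
    ultimately show ?thesis by linarith
  qed
  have mid: "integral {a..b} (\<lambda>x. g x * \<phi> x) = integral {a..b} g"
    by (rule integral_cong) (use phi_one in auto)
  have gphi_bd: "\<bar>g x * \<phi> x\<bar> \<le> M" if "x \<in> {l..r}" for x
  proof -
    have m: "\<bar>g x\<bar> \<le> M" using Mg that l_def r_def by auto
    have "\<bar>g x\<bar> * \<bar>\<phi> x\<bar> \<le> \<bar>g x\<bar> * 1" by (intro mult_left_mono phi_bd) auto
    then show ?thesis using m by (simp add: abs_mult)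
  qed
  have cgphi: "continuous_on {u..v} (\<lambda>x. g x * \<phi> x)" for u v
    by (intro continuous_intros continuous_on_subset[OF cg] continuous_on_subset[OF cphi]; auto)
  have b1: "\<bar>integral {l..a} (\<lambda>x. g x * \<phi> x)\<bar> \<le> M * (a - l)"
    using integral_bound[of l a "\<lambda>x. g x * \<phi> x" M, OF _ cgphi] la ab br gphi_bd by auto
  have b2: "\<bar>integral {b..r} (\<lambda>x. g x * \<phi> x)\<bar> \<le> M * (r - b)"
    using integral_bound[of b r "\<lambda>x. g x * \<phi> x" M, OF _ cgphi] la ab br gphi_bd by auto
  have "M * (a - l) = 2*\<delta>*M" "M * (r - b) = 2*\<delta>*M" unfolding l_def r_def by auto
  then show ?thesis using b1 b2 e1 e2 J0 split mid by linarith
qed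
lemma weak_identity:
  fixes P g :: "real \<Rightarrow> real"
  assumes cP: "continuous_on UNIV P" and cg: "continuous_on UNIV g"
  and weak: "\<And>\<phi>. test_fun \<phi> \<Longrightarrow> ((\<lambda>\<xi>. P \<xi> * deriv \<phi> \<xi> - g \<xi> * \<phi> \<xi>) has_integral 0) UNIV"
  and ab: "a < b"
  shows "P a - P b = integral {a..b} g"
proof -
  obtain M where M: "\<And>x. x \<in> {a-2..b+2} \<Longrightarrow> \<bar>g x\<bar> \<le> M"
  proof -
    have "bounded (g ` {a-2..b+2})"
      by (intro compact_imp_bounded compact_continuous_image continuous_on_subset[OF cg]) auto
    then obtain B where B: "\<forall>x\<in>g ` {a-2..b+2}. \<bar>x\<bar> \<le> B" unfolding bounded_real by auto
    show ?thesis by (rule that[of B]) (use B in auto)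
  qed
  have M0: "M \<ge> 0" using M[of a] ab by auto
  have "\<bar>P a - P b - integral {a..b} g\<bar> \<le> 3 * e" if e: "e > 0" for e
  proof -
    obtain da where da: "da > 0" "\<And>x. dist x a < da \<Longrightarrow> dist (P x) (P a) < e"
      using cP e unfolding continuous_on_iff by (meson UNIV_I)
    obtain db where db: "db > 0" "\<And>x. dist x b < db \<Longrightarrow> dist (P x) (P b) < e"
      using cP e unfolding continuous_on_iff by (meson UNIV_I)
    define \<delta> where "\<delta> = min (min da db) (min 1 (e / (4 * (M + 1)))) / 3"
    have \<delta>0: "\<delta> > 0" using da db e M0 unfolding \<delta>_def by auto
    have \<delta>a: "2*\<delta> < da" and \<delta>b: "2*\<delta> < db" and \<delta>1: "\<delta> \<le> 1"
      using da db e M0 unfolding \<delta>_def by auto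
    have \<delta>e: "4 * \<delta> * M \<le> e"
    proof -
      have q: "e / (4 * (M + 1)) > 0" using e M0 by simp
      define y where "y = e / (4 * (M + 1))"
      define \<mu> where "\<mu> = min (min da db) (min 1 y)"
      have "\<mu> \<le> y" unfolding \<mu>_def by simp
      moreover have "\<delta> = \<mu> / 3" unfolding \<delta>_def \<mu>_def y_def by simp
      ultimately have "\<delta> \<le> y" using q unfolding y_def by linarith
      then have "\<delta> \<le> e / (4 * (M + 1))" unfolding y_def .
      then have "4 * \<delta> * (M + 1) \<le> e" using M0 by (simp add: field_simps)
      then show ?thesis using \<delta>0 by (smt (verit) mult_nonneg_nonneg distrib_left)
    qed
    have "\<bar>P a - P b - integral {a..b} g\<bar> \<le> e + e + 4*\<delta>*M"
    proof (rule weak_core[OF cP cg weak ab \<delta>0])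
      fix x assume "x \<in> {a-2*\<delta>..a}"
      then have "dist x a < da" using \<delta>a by (auto simp: dist_real_def)
      then show "\<bar>P x - P a\<bar> \<le> e" using da(2) by (auto simp: dist_real_def less_imp_le)
    next
      fix x assume "x \<in> {b..b+2*\<delta>}"
      then have "dist x b < db" using \<delta>b by (auto simp: dist_real_def)
      then show "\<bar>P x - P b\<bar> \<le> e" using db(2) by (auto simp: dist_real_def less_imp_le)
    next
      fix x assume "x \<in> {a-2*\<delta>..b+2*\<delta>}"
      then show "\<bar>g x\<bar> \<le> M" using \<delta>1 by (intro M) auto
    qed (auto simp: weak)
    then show ?thesis using \<delta>e by linarith
  qed
  then have D: "\<bar>P a - P b - integral {a..b} g\<bar> \<le> 3 * e" if "e > 0" for e using that by blast
  have "\<bar>P a - P b - integral {a..b} g\<bar> \<le> 0"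
  proof (rule field_le_epsilon)
    fix e :: real assume "e > 0"
    then show "\<bar>P a - P b - integral {a..b} g\<bar> \<le> 0 + e" using D[of "e/3"] by simp
  qed
  then show ?thesis by simp
qed

locale tw =
  fixes m p \<gamma> c :: real and h h' U :: "real \<Rightarrow> real"
  assumes m_pos: "m > 0" and p_gt: "p > 1" and mp: "m * (p - 1) > 1"
    and h_deriv: "\<forall>x\<ge>0. (h has_real_derivative h' x) (at x within {0..})"
    and h0: "h 0 = 0"
    and c_pos: "c > 0" and \<gamma>_nn: "\<gamma> \<ge> 0"
    and tws: "tw_solution m p h \<gamma> c U"
    and U_cont: "continuous_on UNIV U" and U_mono: "antimono U"
    and U_pos: "\<And>\<xi>. U \<xi> > 0 \<longleftrightarrow> \<xi> < 0"
    and U_zero: "\<And>\<xi>. \<xi> \<ge> 0 \<Longrightarrow> U \<xi> = 0"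
begin

definition "w = (\<lambda>s. U s powr m)"
definition "w' = deriv w"
definition "\<Phi> = flux m p U"
definition "P = (\<lambda>\<xi>. c * U \<xi> + \<Phi> \<xi>)"
definition "g = (\<lambda>\<xi>. \<gamma> * \<Phi> \<xi> + h (U \<xi>))"

lemma U_nn: "U \<xi> \<ge> 0"
  using U_pos[of \<xi>] U_zero[of \<xi>] by (cases "\<xi> < 0") auto

lemma w_diff: "(w has_real_derivative w' \<xi>) (at \<xi>)"
  using tws unfolding tw_solution_def w_def w'_def
  by (simp add: DERIV_deriv_iff_real_differentiable)

lemma w'_cont: "continuous_on UNIV w'"
  using tws unfolding tw_solution_def w_def w'_def by simp

lemma w_nn: "w \<xi> \<ge> 0" unfolding w_def by simp

lemma w_mono: "x \<le> y \<Longrightarrow> w y \<le> w x"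
  unfolding w_def using U_mono U_nn m_pos
  by (intro powr_mono2) (auto simp: antimono_def)

lemma w'_nonpos: "w' \<xi> \<le> 0"
proof (rule ccontr)
  assume "\<not> w' \<xi> \<le> 0"
  then have "w' \<xi> > 0" by simp
  from DERIV_pos_inc_right[OF w_diff this]
  obtain d where d: "d > 0" "\<forall>k>0. k < d \<longrightarrow> w \<xi> < w (\<xi> + k)" by blast
  have "w \<xi> < w (\<xi> + d/2)" using d by simp
  moreover have "w (\<xi> + d/2) \<le> w \<xi>" using d by (intro w_mono) auto
  ultimately show False by simp
qed

lemma w'_zero: "\<xi> \<ge> 0 \<Longrightarrow> w' \<xi> = 0"
proof -
  assume "\<xi> \<ge> 0"
  then have "w \<xi> = 0" unfolding w_def using U_zero by simp
  then show ?thesis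
    by (intro DERIV_local_min[OF w_diff, of 1]) (auto simp: w_nn)
qed

lemma Phi_eq: "\<Phi> \<xi> = - ((- w' \<xi>) powr (p - 1))"
proof -
  have wn: "w' \<xi> \<le> 0" by (rule w'_nonpos)
  have "\<Phi> \<xi> = \<bar>w' \<xi>\<bar> powr (p - 2) * w' \<xi>"
    unfolding \<Phi>_def flux_def w'_def w_def by simp
  also have "\<dots> = - ((- w' \<xi>) powr (p - 2) * (- w' \<xi>))"
    using wn by (simp add: abs_of_nonpos)
  also have "\<dots> = - ((- w' \<xi>) powr (p - 1))"
    using powr_add[of "-w' \<xi>" "p-2" 1] wn by simp
  finally show ?thesis .
qed

lemma Phi_cont: "continuous_on UNIV \<Phi>"
proof -
  have "continuous_on UNIV (\<lambda>\<xi>. - ((- w' \<xi>) powr (p - 1)))"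
    using w'_nonpos p_gt
    by (intro continuous_on_minus continuous_on_powr' w'_cont continuous_on_const) auto
  then show ?thesis using Phi_eq by simp
qed

lemma Phi_nonpos: "\<Phi> \<xi> \<le> 0" using Phi_eq by simp

lemma Phi_zero: "\<xi> \<ge> 0 \<Longrightarrow> \<Phi> \<xi> = 0" using Phi_eq w'_zero p_gt by simp

lemma h_cont: "continuous_on {0..} h"
proof (subst continuous_on_eq_continuous_within, intro ballI)
  fix x :: real assume "x \<in> {0..}"
  then have "x \<ge> 0" by simp
  show "continuous (at x within {0..}) h"
    by (rule DERIV_continuous[OF h_deriv[rule_format, OF \<open>x \<ge> 0\<close>]])
qed

lemma g_cont: "continuous_on UNIV g"
proof -
  have "continuous_on UNIV (\<lambda>\<xi>. h (U \<xi>))"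
    by (rule continuous_on_compose2[OF h_cont U_cont]) (auto simp: U_nn)
  then show ?thesis unfolding g_def by (intro continuous_intros Phi_cont)
qed

lemma P_cont: "continuous_on UNIV P"
  unfolding P_def by (intro continuous_intros Phi_cont U_cont)

lemma P_zero: "\<xi> \<ge> 0 \<Longrightarrow> P \<xi> = 0" unfolding P_def using U_zero Phi_zero by simp

lemma g_zero: "\<xi> \<ge> 0 \<Longrightarrow> g \<xi> = 0" unfolding g_def using U_zero Phi_zero h0 by simp

lemma P_int: "\<xi> \<le> 0 \<Longrightarrow> P \<xi> = integral {\<xi>..0} g"
proof (cases "\<xi> = 0")
  case True then show ?thesis using P_zero by simp
next
  case False
  assume "\<xi> \<le> 0"
  then have "\<xi> < 0" using False by simp
  have "P \<xi> - P 0 = integral {\<xi>..0} g"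
  proof (rule weak_identity[OF P_cont g_cont _ \<open>\<xi> < 0\<close>])
    fix \<phi> :: "real \<Rightarrow> real" assume "test_fun \<phi>"
    then show "((\<lambda>\<xi>. P \<xi> * deriv \<phi> \<xi> - g \<xi> * \<phi> \<xi>) has_integral 0) UNIV"
    proof -
      have "\<forall>\<phi>. test_fun \<phi> \<longrightarrow>
          ((\<lambda>\<xi>. (c * U \<xi> + flux m p U \<xi>) * deriv \<phi> \<xi>
                 - (\<gamma> * flux m p U \<xi> + h (U \<xi>)) * \<phi> \<xi>) has_integral 0) UNIV"
        using tws unfolding tw_solution_def by (elim conjE)
      then show ?thesis using \<open>test_fun \<phi>\<close> unfolding P_def g_def \<Phi>_def by simp
    qed
  qed
  then show ?thesis using P_zero by simp
qed

end

context tw begin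

lemma U_lim0: "(U \<longlongrightarrow> 0) (at_left 0)"
proof -
  have "isCont U 0" using U_cont by (simp add: continuous_on_eq_continuous_at)
  then have "(U \<longlongrightarrow> U 0) (at 0)" by (simp add: isCont_def)
  then have "(U \<longlongrightarrow> 0) (at 0)" using U_zero[of 0] by simp
  then show ?thesis by (rule tendsto_within_subset) simp
qed

lemma ev_neg: "eventually (\<lambda>\<xi>. \<xi> < 0) (at_left (0::real))"
  by (simp add: eventually_at_filter)

lemma U_filterlim: "filterlim U (at_right 0) (at_left 0)"
  unfolding filterlim_at
proof
  show "\<forall>\<^sub>F x in at_left 0. U x \<in> {0<..} \<and> U x \<noteq> 0"
    using ev_neg
  proof eventually_elim
    case (elim x)
    then have "U x > 0" using U_pos by blast
    then show ?case by simp
  qed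
qed (rule U_lim0)

lemma hU_lim: "((\<lambda>\<xi>. h (U \<xi>) / U \<xi>) \<longlongrightarrow> h' 0) (at_left 0)"
proof -
  have "(h has_real_derivative h' 0) (at 0 within {0..})" using h_deriv by simp
  then have "((\<lambda>y. (h y - h 0) / (y - 0)) \<longlongrightarrow> h' 0) (at 0 within {0..})"
    by (simp add: has_field_derivative_iff)
  then have "((\<lambda>y. h y / y) \<longlongrightarrow> h' 0) (at 0 within {0..})" using h0 by simp
  then have "((\<lambda>y. h y / y) \<longlongrightarrow> h' 0) (at_right 0)"
    by (rule tendsto_within_subset) auto
  then show ?thesis using filterlim_compose[OF _ U_filterlim] by blast
qed

definition "L = \<bar>h' 0\<bar> + 1"

lemma ev_hbound: "eventually (\<lambda>\<xi>. \<bar>h (U \<xi>)\<bar> \<le> L * U \<xi>) (at_left 0)"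
proof -
  have "eventually (\<lambda>\<xi>. dist (h (U \<xi>) / U \<xi>) (h' 0) < 1) (at_left 0)"
    using hU_lim by (rule tendstoD) simp
  then show ?thesis using ev_neg
  proof eventually_elim
    case (elim \<xi>)
    then have u: "U \<xi> > 0" using U_pos by simp
    have "\<bar>h (U \<xi>) / U \<xi>\<bar> \<le> L" using elim(1) unfolding L_def dist_real_def by linarith
    then show ?case using u by (simp add: abs_div divide_le_eq)
  qed
qed

lemma g_int: "(\<lambda>s. \<bar>g s\<bar>) integrable_on {a..b}" "g integrable_on {a..b}"
  by (intro integrable_continuous_interval continuous_intros continuous_on_subset[OF g_cont]; simp)+

definition "Q = (\<lambda>t. integral {t..0} (\<lambda>s. \<bar>g s\<bar>))"

lemma P_le_Q: "t \<le> 0 \<Longrightarrow> \<bar>P t\<bar> \<le> Q t"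
  unfolding Q_def P_int
  using integral_norm_bound_integral[OF g_int(2) g_int(1), of t 0] by simp

lemma Q_mono: "\<xi> \<le> t \<Longrightarrow> t \<le> 0 \<Longrightarrow> Q t \<le> Q \<xi>"
proof -
  assume a: "\<xi> \<le> t" "t \<le> 0"
  have "integral {\<xi>..t} (\<lambda>s. \<bar>g s\<bar>) + integral {t..0} (\<lambda>s. \<bar>g s\<bar>) = integral {\<xi>..0} (\<lambda>s. \<bar>g s\<bar>)"
    using a g_int by (intro Henstock_Kurzweil_Integration.integral_combine) auto
  moreover have "integral {\<xi>..t} (\<lambda>s. \<bar>g s\<bar>) \<ge> 0" using g_int by (intro integral_nonneg) auto
  ultimately show ?thesis unfolding Q_def by linarith
qed

lemma Q_nn: "Q t \<ge> 0" unfolding Q_def using g_int by (intro integral_nonneg) auto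

lemma U_anti: "x \<le> y \<Longrightarrow> U y \<le> U x" using U_mono by (auto simp: antimono_def)

lemma g_bound:
  assumes t: "t \<le> 0" and hb: "\<bar>h (U t)\<bar> \<le> L * U t"
  shows "\<bar>g t\<bar> \<le> (\<gamma> * c + L) * U t + \<gamma> * Q t"
proof -
  have "\<bar>\<Phi> t\<bar> = c * U t - P t" unfolding P_def using Phi_nonpos[of t] by simp
  also have "\<dots> \<le> c * U t + Q t" using P_le_Q[OF t] by linarith
  finally have ph: "\<bar>\<Phi> t\<bar> \<le> c * U t + Q t" .
  have "\<bar>g t\<bar> \<le> \<gamma> * \<bar>\<Phi> t\<bar> + \<bar>h (U t)\<bar>" unfolding g_def using \<gamma>_nn
    using abs_triangle_ineq[of "\<gamma> * \<Phi> t" "h (U t)"] by (simp add: abs_mult)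
  also have "\<dots> \<le> \<gamma> * (c * U t + Q t) + L * U t"
    using ph hb \<gamma>_nn by (intro add_mono mult_left_mono) auto
  finally show ?thesis by (simp add: algebra_simps)
qed

lemma ev_Pbound:
  "\<exists>\<xi>0<0. \<forall>\<xi>. \<xi>0 < \<xi> \<and> \<xi> < 0 \<longrightarrow> \<bar>P \<xi>\<bar> \<le> 2 * (\<gamma> * c + L) * (-\<xi>) * U \<xi>"
proof -
  obtain b where b: "b < 0" "\<And>y. b < y \<Longrightarrow> y < 0 \<Longrightarrow> \<bar>h (U y)\<bar> \<le> L * U y"
    using ev_hbound unfolding eventually_at_left_field by auto
  define \<xi>0 where "\<xi>0 = max b (- 1 / (2 * \<gamma> + 1))"
  have \<xi>0: "\<xi>0 < 0" unfolding \<xi>0_def using b \<gamma>_nn by (auto simp: field_simps)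
  have L0: "L \<ge> 0" unfolding L_def by simp
  show ?thesis
  proof (intro exI conjI allI impI)
    show "\<xi>0 < 0" by fact
    fix \<xi> assume \<xi>: "\<xi>0 < \<xi> \<and> \<xi> < 0"
    have hb: "\<bar>h (U t)\<bar> \<le> L * U t" if "\<xi> \<le> t" "t \<le> 0" for t
    proof (cases "t = 0")
      case True then show ?thesis using U_zero h0 by simp
    next
      case False then show ?thesis using b(2)[of t] that \<xi> unfolding \<xi>0_def by auto
    qed
    define K where "K = (\<gamma> * c + L) * U \<xi> + \<gamma> * Q \<xi>"
    have gK: "\<bar>g t\<bar> \<le> K" if "t \<in> {\<xi>..0}" for t
    proof -
      have "\<bar>g t\<bar> \<le> (\<gamma> * c + L) * U t + \<gamma> * Q t" using that by (intro g_bound hb) auto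
      also have "\<dots> \<le> K" unfolding K_def using that \<gamma>_nn c_pos L0
        by (intro add_mono mult_left_mono U_anti Q_mono) auto
      finally show ?thesis .
    qed
    have "Q \<xi> \<le> integral {\<xi>..0} (\<lambda>s. K)"
      unfolding Q_def using gK g_int by (intro integral_le) auto
    also have "\<dots> = (-\<xi>) * K" using \<xi> by simp
    finally have QK: "Q \<xi> \<le> (-\<xi>) * K" .
    have gx: "\<gamma> * (-\<xi>) \<le> 1/2"
    proof -
      have "-\<xi> \<le> 1 / (2 * \<gamma> + 1)" using \<xi> unfolding \<xi>0_def by auto
      then have "\<gamma> * (-\<xi>) \<le> \<gamma> / (2 * \<gamma> + 1)" using \<gamma>_nn by (metis mult_left_mono times_divide_eq_right mult_1_right)
      also have "\<dots> \<le> 1/2" using \<gamma>_nn by (simp add: field_simps)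
      finally show ?thesis .
    qed
    have "Q \<xi> \<le> (-\<xi>) * (\<gamma> * c + L) * U \<xi> + (\<gamma> * (-\<xi>)) * Q \<xi>"
      using QK unfolding K_def by (simp add: algebra_simps)
    also have "\<dots> \<le> (-\<xi>) * (\<gamma> * c + L) * U \<xi> + (1/2) * Q \<xi>"
      using gx Q_nn by (intro add_left_mono mult_right_mono) auto
    finally have "Q \<xi> \<le> 2 * (\<gamma> * c + L) * (-\<xi>) * U \<xi>" by (simp add: algebra_simps)
    then show "\<bar>P \<xi>\<bar> \<le> 2 * (\<gamma> * c + L) * (-\<xi>) * U \<xi>" using P_le_Q[of \<xi>] \<xi> by linarith
  qed
qed

definition "Fn = (\<lambda>\<xi>. \<Phi> \<xi> / U \<xi>)"

lemma Fn_lim: "(Fn \<longlongrightarrow> -c) (at_left 0)"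
proof -
  obtain \<xi>0 where \<xi>0: "\<xi>0 < 0" "\<And>\<xi>. \<xi>0 < \<xi> \<Longrightarrow> \<xi> < 0 \<Longrightarrow> \<bar>P \<xi>\<bar> \<le> 2 * (\<gamma> * c + L) * (-\<xi>) * U \<xi>"
    using ev_Pbound by blast
  have ev: "eventually (\<lambda>\<xi>. norm (Fn \<xi> + c) \<le> 2 * (\<gamma> * c + L) * (-\<xi>)) (at_left 0)"
    unfolding eventually_at_left_field
  proof (intro exI conjI allI impI)
    show "\<xi>0 < 0" by fact
    fix \<xi> assume a: "\<xi>0 < \<xi>" "\<xi> < 0"
    then have u: "U \<xi> > 0" using U_pos by simp
    have "Fn \<xi> + c = P \<xi> / U \<xi>" unfolding Fn_def P_def using u by (simp add: field_simps)
    then have "norm (Fn \<xi> + c) = \<bar>P \<xi>\<bar> / U \<xi>" using u by (simp add: abs_div)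
    also have "\<dots> \<le> 2 * (\<gamma> * c + L) * (-\<xi>)" using \<xi>0(2)[OF a] u by (simp add: divide_le_eq)
    finally show "norm (Fn \<xi> + c) \<le> 2 * (\<gamma> * c + L) * (-\<xi>)" .
  qed
  have "((\<lambda>\<xi>. 2 * (\<gamma> * c + L) * (-\<xi>)) \<longlongrightarrow> 2 * (\<gamma> * c + L) * (-0)) (at_left (0::real))"
    by (intro tendsto_intros)
  then have "((\<lambda>\<xi>. 2 * (\<gamma> * c + L) * (-\<xi>)) \<longlongrightarrow> 0) (at_left (0::real))" by simp
  from Lim_null_comparison[OF ev this]
  have "((\<lambda>\<xi>. Fn \<xi> + c) \<longlongrightarrow> 0) (at_left 0)" .
  then have "((\<lambda>\<xi>. Fn \<xi> + c - c) \<longlongrightarrow> 0 - c) (at_left 0)" by (intro tendsto_intros)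
  then show ?thesis by simp
qed

end

context tw begin

definition "a = alpha p"
definition "\<beta> = m - a"
definition "up = (\<lambda>\<xi>. U \<xi> * w' \<xi> / (m * w \<xi>))"
definition "D = (\<lambda>\<xi>. U \<xi> powr \<beta> * w' \<xi> / w \<xi>)"
definition "X = (\<lambda>\<xi>. U \<xi> powr (\<beta> + 1))"
definition "Bn = (\<lambda>\<xi>. - g \<xi> / U \<xi>)"
definition "Dn = (\<lambda>\<xi>. - ((- Fn \<xi>) powr a))"

lemma a_pos: "a > 0" unfolding a_def alpha_def using p_gt by simp
lemma a_p: "a * (p - 1) = 1" unfolding a_def alpha_def using p_gt by simp
lemma \<beta>_pos: "\<beta> > 0"
proof -
  have "1 / (p - 1) < m" using mp p_gt by (simp add: field_simps)
  then show ?thesis unfolding \<beta>_def a_def alpha_def by simp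
qed

lemma U_gt: "\<xi> < 0 \<Longrightarrow> U \<xi> > 0" using U_pos by blast
lemma U_ne: "\<xi> < 0 \<Longrightarrow> U \<xi> \<noteq> 0" using U_gt by force
lemma w_pos: "\<xi> < 0 \<Longrightarrow> w \<xi> > 0" unfolding w_def using U_ne by simp

lemma U_deriv: assumes "\<xi> < 0" shows "(U has_real_derivative up \<xi>) (at \<xi>)"
proof -
  have d: "((\<lambda>s. w s powr (1/m)) has_real_derivative w \<xi> powr (1/m) * (0 * ln (w \<xi>) + w' \<xi> * (1/m) / w \<xi>)) (at \<xi>)"
    by (rule DERIV_powr[OF w_diff w_pos[OF assms] DERIV_const])
  have e: "w s powr (1/m) = U s" for s
    unfolding w_def using m_pos U_nn[of s] by (simp add: powr_powr)
  have "w \<xi> powr (1/m) * (0 * ln (w \<xi>) + w' \<xi> * (1/m) / w \<xi>) = up \<xi>"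
    unfolding e up_def by simp
  then show ?thesis using d e by simp
qed

lemma P_deriv: assumes "\<xi> < 0" shows "(P has_real_derivative - g \<xi>) (at \<xi>)"
proof -
  have "((\<lambda>x. integral {x..0} g) has_real_derivative - g \<xi>) (at \<xi> within {\<xi>-1..0})"
    using assms by (intro integral_has_real_derivative' continuous_on_subset[OF g_cont]) auto
  then have "((\<lambda>x. integral {x..0} g) has_real_derivative - g \<xi>) (at \<xi>)"
    using at_within_Icc_at[of "\<xi>-1" \<xi> 0] assms by simp
  then show ?thesis
    by (rule has_field_derivative_transform_within_open[where S="{..<0}"]) (use assms P_int in auto)
qed

lemma Phi_deriv: assumes "\<xi> < 0" shows "(\<Phi> has_real_derivative - g \<xi> - c * up \<xi>) (at \<xi>)"
proof -
  have "((\<lambda>s. P s - c * U s) has_real_derivative - g \<xi> - c * up \<xi>) (at \<xi>)"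
    by (intro DERIV_diff DERIV_cmult P_deriv U_deriv assms)
  moreover have "(\<lambda>s. P s - c * U s) = \<Phi>" unfolding P_def by auto
  ultimately show ?thesis by simp
qed

definition "Fn' = (\<lambda>\<xi>. ((- g \<xi> - c * up \<xi>) * U \<xi> - \<Phi> \<xi> * up \<xi>) / (U \<xi> * U \<xi>))"

lemma Fn_deriv: assumes "\<xi> < 0" shows "(Fn has_real_derivative Fn' \<xi>) (at \<xi>)"
  unfolding Fn_def Fn'_def
  by (rule DERIV_divide[OF Phi_deriv[OF assms] U_deriv[OF assms]]) (use U_ne assms in simp)

lemma V_deriv: assumes "\<xi> < 0"
  shows "((\<lambda>\<xi>. m / \<beta> * U \<xi> powr \<beta>) has_real_derivative D \<xi>) (at \<xi>)"
proof -
  have u: "U \<xi> > 0" using U_pos assms by simp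
  have wp: "w \<xi> > 0" using w_pos assms by simp
  have "((\<lambda>\<xi>. m / \<beta> * U \<xi> powr \<beta>) has_real_derivative m / \<beta> * (U \<xi> powr \<beta> * (0 * ln (U \<xi>) + up \<xi> * \<beta> / U \<xi>))) (at \<xi>)"
    by (intro DERIV_cmult DERIV_powr[OF U_deriv[OF assms] u DERIV_const])
  moreover have "m / \<beta> * (U \<xi> powr \<beta> * (0 * ln (U \<xi>) + up \<xi> * \<beta> / U \<xi>)) = D \<xi>"
    unfolding up_def D_def using u wp m_pos \<beta>_pos by (simp add: field_simps)
  ultimately show ?thesis by simp
qed

lemma D_eq: assumes "\<xi> < 0" shows "D \<xi> = Dn \<xi>"
proof -
  define u where "u = U \<xi>"
  define y where "y = - w' \<xi>"
  have u: "u > 0" unfolding u_def using U_pos assms by simp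
  have y: "y \<ge> 0" unfolding y_def using w'_nonpos by simp
  have "- Fn \<xi> = y powr (p - 1) / u" unfolding Fn_def Phi_eq u_def y_def by simp
  then have "(- Fn \<xi>) powr a = (y powr (p - 1)) powr a / u powr a" by (simp add: powr_divide)
  also have "(y powr (p - 1)) powr a = y" using y a_p by (simp add: powr_powr mult.commute)
  finally have fa: "(- Fn \<xi>) powr a = y / u powr a" .
  have um: "u powr \<beta> = u powr m / u powr a" unfolding \<beta>_def by (simp add: powr_diff)
  have "D \<xi> = - (y / u powr a)" unfolding D_def u_def[symmetric] y_def[symmetric] w_def um
    using u by (simp add: field_simps y_def)
  then show ?thesis unfolding Dn_def fa by simp
qed

lemma F_eq: assumes "\<xi> < 0" shows "\<bar>Dn \<xi>\<bar> powr (p - 2) * Dn \<xi> = Fn \<xi>"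
proof -
  define z where "z = (- Fn \<xi>) powr a"
  have z: "z \<ge> 0" unfolding z_def by simp
  have fn: "- Fn \<xi> \<ge> 0" unfolding Fn_def using Phi_nonpos[of \<xi>] U_nn[of \<xi>] by (simp add: divide_nonpos_nonneg)
  have "\<bar>Dn \<xi>\<bar> powr (p - 2) * Dn \<xi> = - (z powr (p - 2) * z)" unfolding Dn_def z_def[symmetric] using z by simp
  also have "\<dots> = - (z powr (p - 1))" using powr_add[of z "p-2" 1] z by simp
  also have "z powr (p - 1) = - Fn \<xi>" unfolding z_def using a_p fn by (simp add: powr_powr)
  finally show ?thesis by simp
qed

lemma X_deriv: assumes "\<xi> < 0" shows "(X has_real_derivative (\<beta> + 1) * X \<xi> * up \<xi> / U \<xi>) (at \<xi>)"
proof -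
  have u: "U \<xi> > 0" using U_pos assms by simp
  have "(X has_real_derivative U \<xi> powr (\<beta> + 1) * (0 * ln (U \<xi>) + up \<xi> * (\<beta> + 1) / U \<xi>)) (at \<xi>)"
    unfolding X_def by (intro DERIV_powr[OF U_deriv[OF assms] u DERIV_const])
  then show ?thesis unfolding X_def by (simp add: field_simps)
qed

lemma ev_Fn_neg: "eventually (\<lambda>\<xi>. Fn \<xi> < 0 \<and> \<xi> < 0) (at_left 0)"
proof -
  have "eventually (\<lambda>\<xi>. Fn \<xi> < 0) (at_left 0)"
    using order_tendstoD(2)[OF Fn_lim, of 0] c_pos by simp
  then show ?thesis using ev_neg by eventually_elim simp
qed

lemma w'_ne: "Fn \<xi> < 0 \<Longrightarrow> w' \<xi> \<noteq> 0"
  unfolding Fn_def Phi_eq using p_gt by auto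

end

lemma alg_A: fixes U Y w w' b m g :: real
  shows "U>0 \<Longrightarrow> Y>0 \<Longrightarrow> w>0 \<Longrightarrow> w' \<noteq> 0 \<Longrightarrow> b>0 \<Longrightarrow> m>0 \<Longrightarrow> (-g/U)*m/((b+1)*(Y*w'/w)) = -g/((b+1)*(Y*U)*(U*w'/(m*w))/U)"
proof -
  assume a: "U>0" "Y>0" "w>0" "w' \<noteq> 0" "b>0" "m>0"
  have "b + 1 \<noteq> 0" using a by simp
  with a show ?thesis by (simp add: divide_simps)
qed

lemma alg_B: fixes B0 m b C :: real
  shows "C > 0 \<Longrightarrow> m > 0 \<Longrightarrow> b > 0 \<Longrightarrow> B0 - (m * B0 / ((b + 1) * (- C))) * (- C) / m = B0 * b / (b + 1)"
proof -
  assume a: "C > 0" "m > 0" "b > 0"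
  have "b + 1 \<noteq> 0" using a by simp
  with a show ?thesis by (simp add: divide_simps) (simp add: algebra_simps)
qed

lemma alg_C: fixes U Y w w' m g P c :: real
  shows "U>0 \<Longrightarrow> Y>0 \<Longrightarrow> w>0 \<Longrightarrow> m>0 \<Longrightarrow> -g/U - (P/(Y*U))*(Y*w'/w)/m = ((-g - c*(U*w'/(m*w)))*U - (P - c*U)*(U*w'/(m*w)))/(U*U)"
  by (simp add: divide_simps) (simp add: algebra_simps)

context tw begin

definition "B0 = \<gamma> * c - h' 0"

lemma mFn_lim: "((\<lambda>\<xi>. - Fn \<xi>) \<longlongrightarrow> c) (at_left 0)"
  using tendsto_minus[OF Fn_lim] by simp

lemma Bn_lim: "(Bn \<longlongrightarrow> B0) (at_left 0)"
proof -
  have "((\<lambda>\<xi>. - \<gamma> * Fn \<xi> - h (U \<xi>) / U \<xi>) \<longlongrightarrow> - \<gamma> * (- c) - h' 0) (at_left 0)"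
    by (intro tendsto_intros Fn_lim hU_lim)
  moreover have "eventually (\<lambda>\<xi>. - \<gamma> * Fn \<xi> - h (U \<xi>) / U \<xi> = Bn \<xi>) (at_left 0)"
    using ev_neg
  proof eventually_elim
    case (elim \<xi>)
    then show ?case unfolding Bn_def g_def Fn_def using U_ne[OF elim] by (simp add: field_simps)
  qed
  ultimately show ?thesis unfolding B0_def by (simp add: tendsto_cong)
qed

lemma Dn_lim: "(Dn \<longlongrightarrow> - (c powr a)) (at_left 0)"
  unfolding Dn_def using c_pos by (intro tendsto_intros mFn_lim) auto

lemma P_lim: "(P \<longlongrightarrow> 0) (at_left 0)"
proof -
  have "isCont P 0" using P_cont by (simp add: continuous_on_eq_continuous_at)
  then have "(P \<longlongrightarrow> 0) (at 0)" using P_zero[of 0] by (simp add: isCont_def)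
  then show ?thesis by (rule tendsto_within_subset) simp
qed

lemma X_lim: "(X \<longlongrightarrow> 0) (at_left 0)"
proof -
  have "((\<lambda>\<xi>. U \<xi> powr (\<beta> + 1)) \<longlongrightarrow> 0 powr (\<beta> + 1)) (at_left 0)"
    using \<beta>_pos U_nn by (intro tendsto_powr' U_lim0 tendsto_const) auto
  then show ?thesis unfolding X_def by simp
qed

definition "X' = (\<lambda>\<xi>. (\<beta> + 1) * X \<xi> * up \<xi> / U \<xi>)"

lemma PX_lim: "((\<lambda>\<xi>. P \<xi> / X \<xi>) \<longlongrightarrow> m * B0 / ((\<beta> + 1) * (- (c powr a)))) (at_left 0)"
proof (rule lhopital_left[OF P_lim X_lim])
  show "\<forall>\<^sub>F x in at_left 0. X x \<noteq> 0" using ev_neg by eventually_elim (simp add: X_def U_ne)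
  show "\<forall>\<^sub>F x in at_left 0. X' x \<noteq> 0" using ev_Fn_neg
  proof eventually_elim
    case (elim x)
    then show ?case unfolding X'_def X_def up_def using U_ne[of x] w_pos[of x] w'_ne[of x] \<beta>_pos m_pos by simp
  qed
  show "\<forall>\<^sub>F x in at_left 0. (P has_real_derivative - g x) (at x)"
    using ev_neg by eventually_elim (rule P_deriv)
  show "\<forall>\<^sub>F x in at_left 0. (X has_real_derivative X' x) (at x)"
    using ev_neg by eventually_elim (unfold X'_def, rule X_deriv)
  have lim: "((\<lambda>\<xi>. Bn \<xi> * m / ((\<beta> + 1) * Dn \<xi>)) \<longlongrightarrow> B0 * m / ((\<beta> + 1) * (- (c powr a)))) (at_left 0)"
    using \<beta>_pos c_pos by (intro tendsto_intros Bn_lim Dn_lim) auto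
  have "eventually (\<lambda>\<xi>. Bn \<xi> * m / ((\<beta> + 1) * Dn \<xi>) = - g \<xi> / X' \<xi>) (at_left 0)"
    using ev_Fn_neg
  proof eventually_elim
    case (elim x)
    then have x: "x < 0" by simp
    have u: "U x > 0" using U_gt[OF x] .
    have wp: "w x > 0" using w_pos[OF x] .
    have wn: "w' x \<noteq> 0" using w'_ne elim by simp
    have Xe: "X x = U x powr \<beta> * U x" unfolding X_def using u by (simp add: powr_add)
    have ub: "U x powr \<beta> > 0" using u by simp
    show ?case unfolding D_eq[OF x, symmetric] Bn_def X'_def Xe up_def D_def
      using alg_A[OF u ub wp wn \<beta>_pos m_pos, of "g x"] by simp
  qed
  with lim show "((\<lambda>\<xi>. - g \<xi> / X' \<xi>) \<longlongrightarrow> m * B0 / ((\<beta> + 1) * (- (c powr a)))) (at_left 0)"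
    by (simp add: tendsto_cong mult.commute)
qed

definition "K = B0 * \<beta> / (\<beta> + 1)"

lemma Fn'_lim: "(Fn' \<longlongrightarrow> K) (at_left 0)"
proof -
  have lim: "((\<lambda>\<xi>. Bn \<xi> - (P \<xi> / X \<xi>) * Dn \<xi> / m) \<longlongrightarrow>
      B0 - (m * B0 / ((\<beta> + 1) * (- (c powr a)))) * (- (c powr a)) / m) (at_left 0)"
    by (intro tendsto_intros Bn_lim PX_lim Dn_lim) (use m_pos in auto)
  have eq: "B0 - (m * B0 / ((\<beta> + 1) * (- (c powr a)))) * (- (c powr a)) / m = K"
    unfolding K_def using alg_B[of "c powr a" m \<beta> B0] c_pos m_pos \<beta>_pos by simp
  have "eventually (\<lambda>\<xi>. Bn \<xi> - (P \<xi> / X \<xi>) * Dn \<xi> / m = Fn' \<xi>) (at_left 0)"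
    using ev_neg
  proof eventually_elim
    case (elim x)
    then have x: "x < 0" by simp
    have u: "U x > 0" using U_gt[OF x] .
    have wp: "w x > 0" using w_pos[OF x] .
    have Xe: "X x = U x powr \<beta> * U x" unfolding X_def using u by (simp add: powr_add)
    have ub: "U x powr \<beta> > 0" using u by simp
    have Pe: "\<Phi> x = P x - c * U x" unfolding P_def by simp
    show ?case unfolding D_eq[OF x, symmetric] Bn_def Fn'_def Xe up_def D_def Pe
      using alg_C[OF u ub wp m_pos, of "g x" "P x" "w' x" c] by simp
  qed
  with lim eq show ?thesis by (simp add: tendsto_cong)
qed

definition "Dn' = (\<lambda>\<xi>. - ((- Fn \<xi>) powr a * (0 * ln (- Fn \<xi>) + (- Fn' \<xi>) * a / (- Fn \<xi>))))"

lemma Dn_deriv: assumes "Fn \<xi> < 0" "\<xi> < 0" shows "(Dn has_real_derivative Dn' \<xi>) (at \<xi>)"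
  unfolding Dn_def Dn'_def
  by (intro DERIV_minus DERIV_powr DERIV_const Fn_deriv assms) (use assms in simp)

lemma Dn'_lim: "(Dn' \<longlongrightarrow> - ((c powr a) * (0 * ln c + (- K) * a / c))) (at_left 0)"
  unfolding Dn'_def using c_pos
  by (intro tendsto_intros mFn_lim Fn'_lim) auto

end

lemma final_alg:
  fixes c a p K B0 b :: real
  assumes "c > 0" "p > 1" "a = 1 / (p - 1)" "K = B0 * b / (b + 1)" "b > 0"
  shows "- ((c powr a) * (0 * ln c + (- K) * a / c)) = B0 * b / ((p - 1) * (b + 1) * c powr (1 - a))"
proof -
  define C where "C = c powr a"
  have ca: "C > 0" using assms unfolding C_def by simp
  have e: "c powr (1 - a) = c / C" using assms unfolding C_def by (simp add: powr_diff)
  have p1: "p - 1 > 0" "b + 1 > 0" using assms by auto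
  show ?thesis unfolding e unfolding C_def[symmetric] unfolding assms(3,4) using ca assms(1) p1 by (simp add: divide_simps)
qed

theorem mainTheorem11:
  fixes m p a \<gamma>s \<gamma> :: real and h h' cf U :: "real \<Rightarrow> real"
  assumes m_pos: "m > 0" and p_gt: "p > 1" and mp: "m * (p - 1) > 1"
    and h_deriv: "\<forall>x\<ge>0. (h has_real_derivative h' x) (at x within {0..})"
    and h'_cont: "continuous_on {0..} h'"
    and h0: "h 0 = 0"
    and a_range: "0 \<le> a" "a < 1"
    and h_neg_a: "\<forall>u\<in>{0..a}. h u \<le> 0"
    and h_pos: "\<forall>u. a < u \<and> u < 1 \<longrightarrow> h u > 0"
    and h_neg1: "\<forall>u>1. h u < 0"
    and h'1: "h' 1 < 0"
    and h_int: "a > 0 \<longrightarrow> integral {0..1} (\<lambda>u. h u * u powr (m - 1)) > 0"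
    and \<gamma>s_pos: "\<gamma>s > 0"
    and cf_speed: "\<forall>g\<in>{0..<\<gamma>s}. cf g > 0 \<and> (\<exists>W. finite_wavefront m p h g (cf g) W)
                     \<and> (\<forall>c W. finite_wavefront m p h g c W \<longrightarrow> c = cf g)"
    and \<gamma>_range: "0 \<le> \<gamma>" "\<gamma> < \<gamma>s"
    and U_front: "finite_wavefront m p h \<gamma> (cf \<gamma>) U"
    and U_supp: "\<forall>\<xi>. U \<xi> > 0 \<longleftrightarrow> \<xi> < 0"
  shows "let \<alpha> = alpha p; c = cf \<gamma>;
             V = (\<lambda>\<xi>. m / (m - \<alpha>) * U \<xi> powr (m - \<alpha>));
             F = (\<lambda>\<xi>. \<bar>deriv V \<xi>\<bar> powr (p - 2) * deriv V \<xi>)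
         in (\<forall>\<^sub>F \<xi> in at_left 0. V differentiable at \<xi> \<and> deriv V differentiable at \<xi>
                                   \<and> F differentiable at \<xi>)
          \<and> (deriv V \<longlongrightarrow> - (c powr \<alpha>)) (at_left 0)
          \<and> (deriv (deriv V) \<longlongrightarrow>
               (\<gamma> * c - h' 0) * (m - \<alpha>) / ((p - 1) * (m - \<alpha> + 1) * c powr (1 - \<alpha>))) (at_left 0)
          \<and> (deriv F \<longlongrightarrow> (\<gamma> * c - h' 0) * (m - \<alpha>) / (m - \<alpha> + 1)) (at_left 0)"
proof -
  have c_pos: "cf \<gamma> > 0" using cf_speed \<gamma>_range by auto
  have tws: "tw_solution m p h \<gamma> (cf \<gamma>) U" and Uc: "continuous_on UNIV U" and Um: "antimono U"
    and ex0: "\<exists>\<xi>0. (\<forall>\<xi>\<ge>\<xi>0. U \<xi> = 0) \<and> (\<forall>\<xi><\<xi>0. U \<xi> > 0)"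
    using U_front unfolding finite_wavefront_def by auto
  obtain \<xi>0 where \<xi>0: "\<forall>\<xi>\<ge>\<xi>0. U \<xi> = 0" using ex0 by blast
  have U_zero: "U \<xi> = 0" if "\<xi> \<ge> 0" for \<xi>
  proof -
    have "U (max \<xi> \<xi>0) \<le> U \<xi>" using Um by (auto simp: antimono_def)
    moreover have "U (max \<xi> \<xi>0) = 0" using \<xi>0 by simp
    moreover have "\<not> U \<xi> > 0" using U_supp that by simp
    ultimately show ?thesis by simp
  qed
  interpret T: tw m p \<gamma> "cf \<gamma>" h h' U
    by unfold_locales (use m_pos p_gt mp h_deriv h0 c_pos \<gamma>_range tws Uc Um U_supp U_zero in auto)
  define V where "V = (\<lambda>\<xi>. m / (m - alpha p) * U \<xi> powr (m - alpha p))"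
  define F where "F = (\<lambda>\<xi>. \<bar>deriv V \<xi>\<bar> powr (p - 2) * deriv V \<xi>)"
  have Ve: "V = (\<lambda>\<xi>. m / T.\<beta> * U \<xi> powr T.\<beta>)" unfolding V_def T.\<beta>_def T.a_def ..
  have Vd: "(V has_real_derivative T.D \<xi>) (at \<xi>)" if "\<xi> < 0" for \<xi>
    unfolding Ve by (rule T.V_deriv[OF that])
  have dV: "deriv V \<xi> = T.Dn \<xi>" if "\<xi> < 0" for \<xi>
    using DERIV_imp_deriv[OF Vd[OF that]] T.D_eq[OF that] by simp
  have dVd: "(deriv V has_real_derivative T.Dn' \<xi>) (at \<xi>)" if "T.Fn \<xi> < 0" "\<xi> < 0" for \<xi>
    by (rule has_field_derivative_transform_within_open[OF T.Dn_deriv[OF that], where S="{..<0}"])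
       (use that dV in auto)
  have Fe: "F \<xi> = T.Fn \<xi>" if "\<xi> < 0" for \<xi>
    unfolding F_def dV[OF that] by (rule T.F_eq[OF that])
  have Fd: "(F has_real_derivative T.Fn' \<xi>) (at \<xi>)" if "\<xi> < 0" for \<xi>
    by (rule has_field_derivative_transform_within_open[OF T.Fn_deriv[OF that], where S="{..<0}"])
       (use that Fe in auto)
  have P1: "\<forall>\<^sub>F \<xi> in at_left 0. V differentiable at \<xi> \<and> deriv V differentiable at \<xi> \<and> F differentiable at \<xi>"
    using T.ev_Fn_neg
  proof eventually_elim
    case (elim \<xi>)
    then show ?case using Vd[of \<xi>] dVd[of \<xi>] Fd[of \<xi>] real_differentiable_def by blast
  qed
  have P2: "(deriv V \<longlongrightarrow> - (cf \<gamma> powr alpha p)) (at_left 0)"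
  proof -
    have "eventually (\<lambda>\<xi>. T.Dn \<xi> = deriv V \<xi>) (at_left 0)"
      using T.ev_neg by eventually_elim (simp add: dV)
    then show ?thesis using T.Dn_lim unfolding T.a_def by (simp add: tendsto_cong)
  qed
  have P3: "(deriv (deriv V) \<longlongrightarrow>
               (\<gamma> * cf \<gamma> - h' 0) * (m - alpha p) / ((p - 1) * (m - alpha p + 1) * cf \<gamma> powr (1 - alpha p))) (at_left 0)"
  proof -
    have "eventually (\<lambda>\<xi>. T.Dn' \<xi> = deriv (deriv V) \<xi>) (at_left 0)"
      using T.ev_Fn_neg by eventually_elim (metis DERIV_imp_deriv dVd)
    then have "(deriv (deriv V) \<longlongrightarrow> - ((cf \<gamma> powr T.a) * (0 * ln (cf \<gamma>) + (- T.K) * T.a / cf \<gamma>))) (at_left 0)"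
      using T.Dn'_lim by (simp add: tendsto_cong)
    moreover have "- ((cf \<gamma> powr T.a) * (0 * ln (cf \<gamma>) + (- T.K) * T.a / cf \<gamma>)) =
        (\<gamma> * cf \<gamma> - h' 0) * (m - alpha p) / ((p - 1) * (m - alpha p + 1) * cf \<gamma> powr (1 - alpha p))"
      using final_alg[OF c_pos p_gt, of T.a T.K T.B0 T.\<beta>] T.\<beta>_pos
      unfolding T.K_def T.B0_def T.\<beta>_def T.a_def alpha_def by simp
    ultimately show ?thesis by simp
  qed
  have P4: "(deriv F \<longlongrightarrow> (\<gamma> * cf \<gamma> - h' 0) * (m - alpha p) / (m - alpha p + 1)) (at_left 0)"
  proof -
    have "eventually (\<lambda>\<xi>. T.Fn' \<xi> = deriv F \<xi>) (at_left 0)"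
      using T.ev_neg by eventually_elim (metis DERIV_imp_deriv Fd)
    then have "(deriv F \<longlongrightarrow> T.K) (at_left 0)" using T.Fn'_lim by (simp add: tendsto_cong)
    then show ?thesis unfolding T.K_def T.B0_def T.\<beta>_def T.a_def by simp
  qed
  show ?thesis unfolding Let_def using P1 P2 P3 P4 unfolding V_def F_def by blast
qed

end
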